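(* Let $\mathfrak{n}$ be a finite dimensional nilpotent Lie algebra over a field of characteristic zero, and let $d\ge 1$. Suppose $\mathfrak{n}=\bigoplus_{\alpha\in\mathbb{Z}_+^d}\mathfrak{n}_\alpha$ is a $\mathbb{Z}_+^d$-grading of $\mathfrak{n}$ with associated polynomial $p$. Then there exist a positive integer $k$ and a grading $\mathfrak{n}=\mathfrak{n}'_1\oplus\mathfrak{n}'_2\oplus\cdots\oplus\mathfrak{n}'_k$ (i.e. a $\mathbb{Z}_+$-grading with $\mathfrak{n}'_j=0$ for $j>k$) whose associated polynomial $p'$ satisfies $L(p')=L(p)$.
   Context: $\mathbb{Z}_+^d$ denotes the set of nonzero $d$-tuples $\alpha=(\alpha_1,\dots,\alpha_d)$ of nonnegative integers. A $\mathbb{Z}_+^d$-grading of a Lie algebra $\mathfrak{n}$ is a vector space decomposition $\mathfrak{n}=\bigoplus_{\alpha\in\mathbb{Z}_+^d}\mathfrak{n}_\alpha$ with $[\mathfrak{n}_\alpha,\mathfrak{n}_\beta]\subset\mathfrak{n}_{\alpha+\beta}$ for all $\alpha,\beta$. Its associated polynomial is $p(x_1,\dots,x_d)=\prod_{\alpha\in\mathbb{Z}_+^d}(1-x_1^{\alpha_1}\cdots x_d^{\alpha_d})^{\dim\mathfrak{n}_\alpha}=\sum_\alpha a_\alpha x_1^{\alpha_1}\cdots x_d^{\alpha_d}\in\mathbb{Z}[x_1,\dots,x_d]$, and the length of $p$ is $L(p)=\sum_\alpha|a_\alpha|$, the sum of the absolute values of its coefficients. A grading $\mathfrak{n}=\mathfrak{n}'_1\oplus\cdots\oplus\mathfrak{n}'_k$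 means $[\mathfrak{n}'_i,\mathfrak{n}'_j]\subset\mathfrak{n}'_{i+j}$ (with $\mathfrak{n}'_m=0$ for $m>k$), i.e. the case $d=1$, with associated polynomial $p'(x)=\prod_{i=1}^k(1-x^i)^{\dim\mathfrak{n}'_i}$. *)

theory Defs
  imports Main "HOL-Library.Poly_Mapping" "HOL-Computational_Algebra.Polynomial"
begin

definition lie_algebra :: "('k::field \<Rightarrow> 'v::ab_group_add \<Rightarrow> 'v) \<Rightarrow> ('v \<Rightarrow> 'v \<Rightarrow> 'v) \<Rightarrow> bool" where
  "lie_algebra scale br \<longleftrightarrow>
     vector_space scale \<and>
     (\<forall>x y z. br (x + y) z = br x z + br y z) \<and>
     (\<forall>x y z. br x (y + z) = br x y + br x z) \<and>
     (\<forall>c x y. br (scale c x) y = scale c (br x y)) \<and>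
     (\<forall>c x y. br x (scale c y) = scale c (br x y)) \<and>
     (\<forall>x. br x x = 0) \<and>
     (\<forall>x y z. br x (br y z) + br y (br z x) + br z (br x y) = 0)"

definition fin_dim :: "('k::field \<Rightarrow> 'v::ab_group_add \<Rightarrow> 'v) \<Rightarrow> bool" where
  "fin_dim scale \<longleftrightarrow> (\<exists>B. finite B \<and> module.span scale B = UNIV)"

fun lower_central :: "('k::field \<Rightarrow> 'v::ab_group_add \<Rightarrow> 'v) \<Rightarrow> ('v \<Rightarrow> 'v \<Rightarrow> 'v) \<Rightarrow> nat \<Rightarrow> 'v set" where
  "lower_central scale br 0 = UNIV"
| "lower_central scale br (Suc i) = module.span scale {br x y | x y. y \<in> lower_central scale br i}"

definition nilpotent_lie :: "('k::field \<Rightarrow> 'v::ab_group_add \<Rightarrow> 'v) \<Rightarrow> ('v \<Rightarrow> 'v \<Rightarrow> 'v) \<Rightarrow> bool" where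
  "nilpotent_lie scale br \<longleftrightarrow> (\<exists>m. lower_central scale br m = {0})"

definition is_direct_sum :: "('k::field \<Rightarrow> 'v::ab_group_add \<Rightarrow> 'v) \<Rightarrow> 'i set \<Rightarrow> ('i \<Rightarrow> 'v set) \<Rightarrow> bool" where
  "is_direct_sum scale I W \<longleftrightarrow>
     (\<forall>i\<in>I. module.subspace scale (W i)) \<and>
     module.span scale (\<Union>i\<in>I. W i) = UNIV \<and>
     (\<forall>S f. finite S \<and> S \<subseteq> I \<and> (\<forall>i\<in>S. f i \<in> W i) \<and> sum f S = 0 \<longrightarrow> (\<forall>i\<in>S. f i = 0))"

text \<open>Z_+^d: nonzero d-tuples of naturals, encoded as finitely supported maps nat =>0 nat
  with support in {0..<d} (coordinate j is lookup alpha j).\<close>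
definition Zplus :: "nat \<Rightarrow> (nat \<Rightarrow>\<^sub>0 nat) set" where
  "Zplus d = {\<alpha>. Poly_Mapping.keys \<alpha> \<subseteq> {..<d} \<and> \<alpha> \<noteq> 0}"

definition Zd_grading :: "('k::field \<Rightarrow> 'v::ab_group_add \<Rightarrow> 'v) \<Rightarrow> ('v \<Rightarrow> 'v \<Rightarrow> 'v) \<Rightarrow> nat \<Rightarrow> ((nat \<Rightarrow>\<^sub>0 nat) \<Rightarrow> 'v set) \<Rightarrow> bool" where
  "Zd_grading scale br d g \<longleftrightarrow>
     is_direct_sum scale (Zplus d) g \<and>
     (\<forall>\<alpha>\<in>Zplus d. \<forall>\<beta>\<in>Zplus d. \<forall>x\<in>g \<alpha>. \<forall>y\<in>g \<beta>. br x y \<in> g (\<alpha> + \<beta>))"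

text \<open>Multivariate integer polynomials in x_0,...,x_{d-1} as (nat =>0 nat) =>0 int;
  the monomial x^alpha is Poly_Mapping.single alpha 1.  Factors with dim = 0 equal 1, so the
  product is taken over the (finitely many) nonzero homogeneous components.\<close>
definition assoc_poly :: "('k::field \<Rightarrow> 'v::ab_group_add \<Rightarrow> 'v) \<Rightarrow> nat \<Rightarrow> ((nat \<Rightarrow>\<^sub>0 nat) \<Rightarrow> 'v set) \<Rightarrow> ((nat \<Rightarrow>\<^sub>0 nat) \<Rightarrow>\<^sub>0 int)" where
  "assoc_poly scale d g =
     (\<Prod>\<alpha>\<in>{\<alpha>\<in>Zplus d. g \<alpha> \<noteq> {0}}. (1 - Poly_Mapping.single \<alpha> 1) ^ vector_space.dim scale (g \<alpha>))"

definition mpoly_length :: "((nat \<Rightarrow>\<^sub>0 nat) \<Rightarrow>\<^sub>0 int) \<Rightarrow> int" where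
  "mpoly_length p = (\<Sum>m\<in>Poly_Mapping.keys p. \<bar>Poly_Mapping.lookup p m\<bar>)"

definition k_grading :: "('k::field \<Rightarrow> 'v::ab_group_add \<Rightarrow> 'v) \<Rightarrow> ('v \<Rightarrow> 'v \<Rightarrow> 'v) \<Rightarrow> nat \<Rightarrow> (nat \<Rightarrow> 'v set) \<Rightarrow> bool" where
  "k_grading scale br k g \<longleftrightarrow>
     is_direct_sum scale {1..k} g \<and>
     (\<forall>i\<in>{1..k}. \<forall>j\<in>{1..k}. \<forall>x\<in>g i. \<forall>y\<in>g j. br x y \<in> (if i + j \<le> k then g (i + j) else {0}))"

definition assoc_poly1 :: "('k::field \<Rightarrow> 'v::ab_group_add \<Rightarrow> 'v) \<Rightarrow> nat \<Rightarrow> (nat \<Rightarrow> 'v set) \<Rightarrow> int poly" where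
  "assoc_poly1 scale k g = (\<Prod>i\<in>{1..k}. (1 - monom 1 i) ^ vector_space.dim scale (g i))"

definition poly_length :: "int poly \<Rightarrow> int" where
  "poly_length p = (\<Sum>i\<le>degree p. \<bar>coeff p i\<bar>)"

end

theory Submission
  imports Defs
begin

lemma digits_bound:
  fixes a :: "nat \<Rightarrow> nat"
  assumes "\<forall>j<d. a j < N"
  shows "(\<Sum>j<d. a j * N^j) < N^d"
  using assms
proof (induction d)
  case 0 then show ?case by simp
next
  case (Suc d)
  have h: "(\<Sum>j<d. a j * N^j) < N^d" using Suc by auto
  have "a d + 1 \<le> N" using Suc.prems by auto
  then have "(a d + 1) * N^d \<le> N * N^d" by (rule mult_right_mono) simp
  then show ?case using h by (simp add: algebra_simps)
qed

lemma digits_unique: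
  fixes a b :: "nat \<Rightarrow> nat"
  assumes "\<forall>j<d. a j < N" "\<forall>j<d. b j < N"
    and "(\<Sum>j<d. a j * N^j) = (\<Sum>j<d. b j * N^j)"
  shows "\<forall>j<d. a j = b j"
  using assms
proof (induction d)
  case 0 then show ?case by simp
next
  case (Suc d)
  define Sa where "Sa = (\<Sum>j<d. a j * N^j)"
  define Sb where "Sb = (\<Sum>j<d. b j * N^j)"
  have ba: "Sa < N^d" unfolding Sa_def using Suc.prems by (intro digits_bound) auto
  have bb: "Sb < N^d" unfolding Sb_def using Suc.prems by (intro digits_bound) auto
  have eq: "Sa + a d * N^d = Sb + b d * N^d" using Suc.prems(3) by (simp add: Sa_def Sb_def)
  have pos: "N^d > 0" using ba by (metis gr_zeroI not_less0)
  have "(Sa + a d * N^d) div N^d = a d" using ba pos by simp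
  moreover have "(Sb + b d * N^d) div N^d = b d" using bb pos by simp
  ultimately have ad: "a d = b d" using eq by simp
  have "(Sa + a d * N^d) mod N^d = Sa" using ba pos by simp
  moreover have "(Sb + b d * N^d) mod N^d = Sb" using bb pos by simp
  ultimately have "Sa = Sb" using eq by simp
  have p1: "\<forall>j<d. a j < N" using Suc.prems(1) by simp
  have p2: "\<forall>j<d. b j < N" using Suc.prems(2) by simp
  have IH': "\<forall>j<d. a j = b j" using Suc.IH[OF p1 p2] \<open>Sa = Sb\<close> unfolding Sa_def Sb_def by blast
  show ?case
  proof (intro allI impI)
    fix j assume "j < Suc d"
    then show "a j = b j" using ad IH' by (cases "j = d") auto
  qed
qed

definition subst_poly :: "((nat \<Rightarrow>\<^sub>0 nat) \<Rightarrow> nat) \<Rightarrow> ((nat \<Rightarrow>\<^sub>0 nat) \<Rightarrow>\<^sub>0 int) \<Rightarrow> int poly" where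
  "subst_poly \<phi> p = (\<Sum>m\<in>Poly_Mapping.keys p. monom (Poly_Mapping.lookup p m) (\<phi> m))"

lemma subst_poly_superset:
  assumes "finite S" "Poly_Mapping.keys p \<subseteq> S"
  shows "subst_poly \<phi> p = (\<Sum>m\<in>S. monom (Poly_Mapping.lookup p m) (\<phi> m))"
  unfolding subst_poly_def
  by (rule sum.mono_neutral_left) (use assms in \<open>auto simp: in_keys_iff\<close>)

lemma subst_poly_add: "subst_poly \<phi> (p + q) = subst_poly \<phi> p + subst_poly \<phi> q"
proof -
  let ?S = "Poly_Mapping.keys p \<union> Poly_Mapping.keys q"
  have "subst_poly \<phi> (p + q) = (\<Sum>m\<in>?S. monom (Poly_Mapping.lookup (p+q) m) (\<phi> m))"
    by (rule subst_poly_superset) (auto simp: keys_add)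
  also have "\<dots> = (\<Sum>m\<in>?S. monom (Poly_Mapping.lookup p m) (\<phi> m)) + (\<Sum>m\<in>?S. monom (Poly_Mapping.lookup q m) (\<phi> m))"
    by (simp add: lookup_add add_monom[symmetric] sum.distrib)
  also have "\<dots> = subst_poly \<phi> p + subst_poly \<phi> q"
    by (subst (1 2) subst_poly_superset[where S="?S"]) auto
  finally show ?thesis .
qed

lemma subst_poly_diff: "subst_poly \<phi> (p - q) = subst_poly \<phi> p - subst_poly \<phi> q"
proof -
  let ?S = "Poly_Mapping.keys p \<union> Poly_Mapping.keys q"
  have "subst_poly \<phi> (p - q) = (\<Sum>m\<in>?S. monom (Poly_Mapping.lookup (p-q) m) (\<phi> m))"
    by (rule subst_poly_superset) (auto dest: set_mp[OF keys_diff])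
  also have "\<dots> = (\<Sum>m\<in>?S. monom (Poly_Mapping.lookup p m) (\<phi> m)) - (\<Sum>m\<in>?S. monom (Poly_Mapping.lookup q m) (\<phi> m))"
    by (simp add: lookup_minus diff_monom[symmetric] sum_subtractf)
  also have "\<dots> = subst_poly \<phi> p - subst_poly \<phi> q"
    by (subst (1 2) subst_poly_superset[where S="?S"]) auto
  finally show ?thesis .
qed

lemma subst_poly_zero [simp]: "subst_poly \<phi> 0 = 0"
  by (simp add: subst_poly_def)

lemma subst_poly_single: "subst_poly \<phi> (Poly_Mapping.single m c) = monom c (\<phi> m)"
  by (cases "c = 0") (auto simp: subst_poly_def)

lemma subst_poly_sum: "subst_poly \<phi> (sum f S) = (\<Sum>s\<in>S. subst_poly \<phi> (f s))"
  by (induction S rule: infinite_finite_induct) (auto simp: subst_poly_add)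

lemma pm_expand: "p = (\<Sum>m\<in>Poly_Mapping.keys p. Poly_Mapping.single m (Poly_Mapping.lookup p m))"
  by (rule poly_mapping_eqI)
     (auto simp: lookup_sum lookup_single when_def in_keys_iff sum.delta' split: if_splits)

lemma subst_poly_mult:
  assumes add: "\<And>a b. \<phi> (a + b) = \<phi> a + \<phi> b"
  shows "subst_poly \<phi> (p * q) = subst_poly \<phi> p * subst_poly \<phi> q"
proof -
  let ?P = "Poly_Mapping.keys p" and ?Q = "Poly_Mapping.keys q"
  have "p * q = (\<Sum>m\<in>?P. Poly_Mapping.single m (Poly_Mapping.lookup p m)) *
                (\<Sum>m\<in>?Q. Poly_Mapping.single m (Poly_Mapping.lookup q m))"
    by (subst pm_expand[of p], subst pm_expand[of q]) (rule refl)
  also have "\<dots> = (\<Sum>m\<in>?P. \<Sum>m'\<in>?Q. Poly_Mapping.single (m + m') (Poly_Mapping.lookup p m * Poly_Mapping.lookup q m'))"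
    by (simp add: sum_distrib_left sum_distrib_right mult_single sum.swap[of _ ?Q])
  finally have "subst_poly \<phi> (p * q) = (\<Sum>m\<in>?P. \<Sum>m'\<in>?Q. monom (Poly_Mapping.lookup p m) (\<phi> m) * monom (Poly_Mapping.lookup q m') (\<phi> m'))"
    by (simp add: subst_poly_sum subst_poly_single add mult_monom)
  also have "\<dots> = subst_poly \<phi> p * subst_poly \<phi> q"
    by (simp add: subst_poly_def sum_distrib_left sum_distrib_right sum.swap[of _ ?Q])
  finally show ?thesis .
qed

lemma subst_poly_one:
  assumes "\<phi> 0 = 0"
  shows "subst_poly \<phi> 1 = 1"
proof -
  have "subst_poly \<phi> (Poly_Mapping.single 0 1) = 1"
    using assms by (simp only: subst_poly_single) (simp add: monom_0 one_pCons)
  then show ?thesis by (simp only: single_one)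
qed

lemma subst_poly_power:
  assumes "\<And>a b. \<phi> (a + b) = \<phi> a + \<phi> b" "\<phi> 0 = 0"
  shows "subst_poly \<phi> (p ^ n) = subst_poly \<phi> p ^ n"
  by (induction n) (simp_all add: subst_poly_one assms subst_poly_mult)

lemma subst_poly_prod:
  assumes "\<And>a b. \<phi> (a + b) = \<phi> a + \<phi> b" "\<phi> 0 = 0"
  shows "subst_poly \<phi> (prod f S) = (\<Prod>s\<in>S. subst_poly \<phi> (f s))"
  by (induction S rule: infinite_finite_induct) (simp_all add: subst_poly_one assms subst_poly_mult)

lemma subst_poly_length:
  assumes "inj_on \<phi> (Poly_Mapping.keys p)"
  shows "poly_length (subst_poly \<phi> p) = mpoly_length p"
proof -
  let ?K = "Poly_Mapping.keys p"
  have coeff: "coeff (subst_poly \<phi> p) n = (\<Sum>m\<in>?K. if \<phi> m = n then Poly_Mapping.lookup p m else 0)" for n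
    by (simp add: subst_poly_def coeff_sum)
  have c1: "coeff (subst_poly \<phi> p) (\<phi> m) = Poly_Mapping.lookup p m" if "m \<in> ?K" for m
  proof -
    have "(\<Sum>m'\<in>?K. if \<phi> m' = \<phi> m then Poly_Mapping.lookup p m' else 0) =
          (\<Sum>m'\<in>?K. if m' = m then Poly_Mapping.lookup p m' else 0)"
      by (rule sum.cong) (use assms that in \<open>auto dest: inj_onD\<close>)
    then show ?thesis using that by (simp add: coeff)
  qed
  have c0: "coeff (subst_poly \<phi> p) n = 0" if "n \<notin> \<phi> ` ?K" for n
    using that by (auto simp: coeff intro!: sum.neutral)
  have sub: "\<phi> ` ?K \<subseteq> {..degree (subst_poly \<phi> p)}"
    using c1 by (auto intro!: le_degree simp: in_keys_iff)
  have "poly_length (subst_poly \<phi> p) = (\<Sum>i\<in>\<phi> ` ?K. \<bar>coeff (subst_poly \<phi> p) i\<bar>)"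
    unfolding poly_length_def
    by (rule sum.mono_neutral_right) (use sub c0 in auto)
  also have "\<dots> = (\<Sum>m\<in>?K. \<bar>coeff (subst_poly \<phi> p) (\<phi> m)\<bar>)"
    by (rule sum.reindex[OF assms, unfolded comp_def])
  also have "\<dots> = mpoly_length p" unfolding mpoly_length_def
    by (rule sum.cong) (simp_all add: c1)
  finally show ?thesis .
qed


context vector_space begin

lemma span_UN_subspaces_obtain:
  assumes "finite F" "\<forall>a\<in>F. subspace (W a)" "x \<in> span (\<Union>a\<in>F. W a)"
  shows "\<exists>h. (\<forall>a\<in>F. h a \<in> W a) \<and> x = sum h F"
  using assms
proof (induction F arbitrary: x rule: finite_induct)
  case empty
  then show ?case by auto
next
  case (insert a F)
  have "x \<in> span (W a \<union> (\<Union>b\<in>F. W b))" using insert.prems by simp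
  then obtain y z where yz: "x = y + z" "y \<in> span (W a)" "z \<in> span (\<Union>b\<in>F. W b)"
    unfolding span_Un by blast
  have "y \<in> W a" using yz(2) insert.prems(1) span_minimal[of "W a" "W a"] by auto
  obtain h where h: "\<forall>b\<in>F. h b \<in> W b" "z = sum h F"
    using insert.IH[OF _ yz(3)] insert.prems(1) by auto
  define h' where "h' = h(a := y)"
  have "sum h' F = sum h F" unfolding h'_def by (rule sum.cong) (use insert.hyps in auto)
  then have "sum h' (insert a F) = x" using insert.hyps yz h by (simp add: h'_def)
  moreover have "\<forall>b\<in>insert a F. h' b \<in> W b" using h \<open>y \<in> W a\<close> by (auto simp: h'_def)
  ultimately show ?case by metis
qed

lemma sum_in_span_UN:
  assumes "\<forall>a\<in>F. h a \<in> W a"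
  shows "sum h F \<in> span (\<Union>a\<in>F. W a)"
  by (rule span_sum) (use assms in \<open>auto intro: span_base\<close>)

end

context finite_dimensional_vector_space begin

lemma dim_span_UN_indep:
  assumes "finite F" "\<forall>a\<in>F. subspace (W a)"
    and "\<forall>S f. S \<subseteq> F \<and> (\<forall>i\<in>S. f i \<in> W i) \<and> sum f S = 0 \<longrightarrow> (\<forall>i\<in>S. f i = 0)"
  shows "dim (span (\<Union>a\<in>F. W a)) = (\<Sum>a\<in>F. dim (W a))"
  using assms
proof (induction F rule: finite_induct)
  case empty
  then show ?case by simp
next
  case (insert a F)
  define T where "T = span (\<Union>b\<in>F. W b)"
  have IH: "dim T = (\<Sum>b\<in>F. dim (W b))"
    unfolding T_def by (rule insert.IH) (use insert.prems in blast)+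
  have sa: "subspace (W a)" using insert.prems by auto
  have sT: "subspace T" unfolding T_def by (rule subspace_span)
  have eqspan: "span (\<Union>b\<in>insert a F. W b) = {x + y |x y. x \<in> W a \<and> y \<in> T}"
  proof -
    have "span (W a) = W a" using sa span_minimal[of "W a" "W a"] span_superset by blast
    then show ?thesis using span_Un[of "W a" "\<Union>b\<in>F. W b"] by (simp del: span_eq_iff add: T_def)
  qed
  have int0: "W a \<inter> T \<subseteq> {0}"
  proof
    fix x assume x: "x \<in> W a \<inter> T"
    then obtain h where h: "\<forall>b\<in>F. h b \<in> W b" "x = sum h F"
      using span_UN_subspaces_obtain[of F W x] insert.prems(1) insert.hyps(1) by (auto simp: T_def)
    define f where "f = h(a := -x)"
    have sf: "sum f F = sum h F" unfolding f_def by (rule sum.cong) (use insert.hyps in auto)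
    have "sum f (insert a F) = 0" using insert.hyps sf h by (simp add: f_def)
    moreover have "\<forall>b\<in>insert a F. f b \<in> W b"
      using h x sa by (auto simp: f_def subspace_neg)
    ultimately have "f a = 0" using insert.prems(2)[rule_format, of "insert a F" f] by blast
    then show "x \<in> {0}" by (simp add: f_def)
  qed
  have sums: "dim {x + y |x y. x \<in> W a \<and> y \<in> T} + dim (W a \<inter> T) = dim (W a) + dim T"
    by (rule dim_sums_Int[OF sa sT])
  have z: "dim (W a \<inter> T) = 0" using int0 by (simp only: dim_eq_0)
  have "dim (span (\<Union>b\<in>insert a F. W b)) = dim (W a) + dim T"
    unfolding eqspan using sums z by linarith
  also have "\<dots> = (\<Sum>b\<in>insert a F. dim (W b))"
    using IH by (simp only: sum.insert[OF insert.hyps])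
  finally show ?case .
qed

lemma finite_nonzero_indep:
  assumes "\<forall>a\<in>I. subspace (W a)"
    and "\<forall>S f. finite S \<and> S \<subseteq> I \<and> (\<forall>i\<in>S. f i \<in> W i) \<and> sum f S = 0 \<longrightarrow> (\<forall>i\<in>S. f i = 0)"
  shows "finite {a\<in>I. W a \<noteq> {0}}"
proof (rule ccontr)
  assume "infinite {a\<in>I. W a \<noteq> {0}}"
  then obtain S where S: "finite S" "card S = Suc dimension" "S \<subseteq> {a\<in>I. W a \<noteq> {0}}"
    using infinite_arbitrarily_large by blast
  have subS: "\<forall>a\<in>S. subspace (W a)" using S assms(1) by auto
  have indS: "\<forall>S' f. S' \<subseteq> S \<and> (\<forall>i\<in>S'. f i \<in> W i) \<and> sum f S' = 0 \<longrightarrow> (\<forall>i\<in>S'. f i = 0)"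
  proof (intro allI impI)
    fix S' f assume H: "S' \<subseteq> S \<and> (\<forall>i\<in>S'. f i \<in> W i) \<and> sum f S' = 0"
    then have "finite S'" "S' \<subseteq> I" using S finite_subset by auto
    then show "\<forall>i\<in>S'. f i = 0" using assms(2) H by blast
  qed
  have "dim (span (\<Union>a\<in>S. W a)) = (\<Sum>a\<in>S. dim (W a))"
    by (rule dim_span_UN_indep[OF S(1) subS indS])
  moreover have "(\<Sum>a\<in>S. dim (W a)) \<ge> (\<Sum>a\<in>S. 1)"
  proof (rule sum_mono)
    fix a assume "a \<in> S"
    then have "W a \<noteq> {0}" "subspace (W a)" using S assms by auto
    then have "\<not> W a \<subseteq> {0}" using subspace_0 by blast
    then have "dim (W a) \<noteq> 0" using dim_eq_0 by blast
    then show "1 \<le> dim (W a)" by linarith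
  qed
  moreover have "dim (span (\<Union>a\<in>S. W a)) \<le> dimension" by (rule dim_subset_UNIV)
  ultimately show False using S by simp
qed

end

lemma br_sum_left:
  fixes br :: "'v::ab_group_add \<Rightarrow> 'v \<Rightarrow> 'v"
  assumes "\<forall>x y z. br (x + y) z = br x z + br y z"
  shows "br (sum f S) y = (\<Sum>s\<in>S. br (f s) y)"
proof -
  have z: "br 0 y = 0" using assms[rule_format, of 0 0 y] by simp
  show ?thesis by (induction S rule: infinite_finite_induct) (simp_all add: z assms)
qed

lemma br_sum_right:
  fixes br :: "'v::ab_group_add \<Rightarrow> 'v \<Rightarrow> 'v"
  assumes "\<forall>x y z. br x (y + z) = br x y + br x z"
  shows "br x (sum f S) = (\<Sum>s\<in>S. br x (f s))"
proof -
  have z: "br x 0 = 0" using assms[rule_format, of x 0 0] by simp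
  show ?thesis by (induction S rule: infinite_finite_induct) (simp_all add: z assms)
qed


lemma keys_prod_closed:
  fixes f :: "'a \<Rightarrow> ((nat \<Rightarrow>\<^sub>0 nat) \<Rightarrow>\<^sub>0 int)"
  assumes "0 \<in> M" "\<forall>x\<in>M. \<forall>y\<in>M. x + y \<in> M" "\<forall>a\<in>S. Poly_Mapping.keys (f a) \<subseteq> M"
  shows "Poly_Mapping.keys (prod f S) \<subseteq> M"
  using assms(3)
proof (induction S rule: infinite_finite_induct)
  case (insert a S)
  then show ?case using keys_mult[of "f a" "prod f S"] assms(2) by (simp add: subset_iff) blast
qed (use assms(1) in auto)

lemma keys_power_closed:
  fixes x :: "((nat \<Rightarrow>\<^sub>0 nat) \<Rightarrow>\<^sub>0 int)"
  assumes "0 \<in> M" "\<forall>x\<in>M. \<forall>y\<in>M. x + y \<in> M" "Poly_Mapping.keys x \<subseteq> M"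
  shows "Poly_Mapping.keys (x ^ n) \<subseteq> M"
proof (induction n)
  case (Suc n)
  then show ?case using keys_mult[of x "x ^ n"] assms by (simp add: subset_iff) blast
qed (use assms(1) in auto)

lemma pm_nat_add_eq_0:
  fixes a b :: "nat \<Rightarrow>\<^sub>0 nat"
  assumes "a + b = 0" shows "a = 0"
proof (rule poly_mapping_eqI)
  fix j
  have "Poly_Mapping.lookup (a + b) j = 0" using assms by simp
  then show "Poly_Mapping.lookup a j = Poly_Mapping.lookup 0 j" by (simp add: lookup_add)
qed


theorem mainTheorem1:
  fixes scale :: "'k::field_char_0 \<Rightarrow> 'v::ab_group_add \<Rightarrow> 'v"
    and br :: "'v \<Rightarrow> 'v \<Rightarrow> 'v"
    and d :: nat
    and g :: "(nat \<Rightarrow>\<^sub>0 nat) \<Rightarrow> 'v set"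
  assumes "lie_algebra scale br"
    and "fin_dim scale"
    and "nilpotent_lie scale br"
    and "d \<ge> 1"
    and "Zd_grading scale br d g"
  shows "\<exists>k::nat. k > 0 \<and> (\<exists>g' :: nat \<Rightarrow> 'v set. k_grading scale br k g' \<and>
           poly_length (assoc_poly1 scale k g') = mpoly_length (assoc_poly scale d g))"
proof -
  have vs: "vector_space scale" and addl: "\<forall>x y z. br (x + y) z = br x z + br y z"
    and addr: "\<forall>x y z. br x (y + z) = br x y + br x z"
    using assms(1) unfolding lie_algebra_def by auto
  interpret vs: vector_space scale by (rule vs)
  obtain B where B: "finite B" "vs.span B = UNIV" using assms(2) unfolding fin_dim_def by auto
  obtain C where C: "C \<subseteq> B" "vs.independent C" "B \<subseteq> vs.span C"
    using vs.maximal_independent_subset by blast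
  have spanC: "vs.span C = UNIV"
    using vs.span_minimal[OF C(3) vs.subspace_span] B(2) by auto
  interpret fd: finite_dimensional_vector_space scale C
    by unfold_locales (use C B spanC finite_subset in auto)
  have subg: "\<forall>\<alpha>\<in>Zplus d. vs.subspace (g \<alpha>)"
    and spang: "vs.span (\<Union>\<alpha>\<in>Zplus d. g \<alpha>) = UNIV"
    and indg: "\<forall>S f. finite S \<and> S \<subseteq> Zplus d \<and> (\<forall>i\<in>S. f i \<in> g i) \<and> sum f S = 0 \<longrightarrow> (\<forall>i\<in>S. f i = 0)"
    and brg: "\<forall>\<alpha>\<in>Zplus d. \<forall>\<beta>\<in>Zplus d. \<forall>x\<in>g \<alpha>. \<forall>y\<in>g \<beta>. br x y \<in> g (\<alpha> + \<beta>)"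
    using assms(5) unfolding Zd_grading_def is_direct_sum_def by auto
  define A where "A = {\<alpha>\<in>Zplus d. g \<alpha> \<noteq> {0}}"
  have finA: "finite A" unfolding A_def by (rule fd.finite_nonzero_indep[OF subg indg])
  have AZ: "A \<subseteq> Zplus d" unfolding A_def by auto
  define p where "p = assoc_poly scale d g"
  have p_eq: "p = (\<Prod>\<alpha>\<in>A. (1 - Poly_Mapping.single \<alpha> 1) ^ vs.dim (g \<alpha>))"
    unfolding p_def assoc_poly_def A_def by simp
  define M where "M = {m :: nat \<Rightarrow>\<^sub>0 nat. Poly_Mapping.keys m \<subseteq> {..<d}}"
  have M0: "0 \<in> M" unfolding M_def by simp
  have Madd: "\<forall>x\<in>M. \<forall>y\<in>M. x + y \<in> M"
  proof (intro ballI)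
    fix x y assume "x \<in> M" "y \<in> M"
    then show "x + y \<in> M" unfolding M_def using keys_add[of x y] by auto
  qed
  have keysp: "Poly_Mapping.keys p \<subseteq> M"
    unfolding p_eq
  proof (rule keys_prod_closed[OF M0 Madd], intro ballI keys_power_closed[OF M0 Madd])
    fix \<alpha> assume "\<alpha> \<in> A"
    then have "\<alpha> \<in> M" using AZ unfolding M_def Zplus_def by auto
    then show "Poly_Mapping.keys (1 - Poly_Mapping.single \<alpha> (1::int)) \<subseteq> M"
      using keys_diff[of 1 "Poly_Mapping.single \<alpha> (1::int)"] M0 by auto
  qed
  define N where "N = Suc (\<Sum>m\<in>Poly_Mapping.keys p. \<Sum>j<d. Poly_Mapping.lookup m j)"
  define \<phi> where "\<phi> m = (\<Sum>j<d. Poly_Mapping.lookup m j * N ^ j)" for m :: "nat \<Rightarrow>\<^sub>0 nat"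
  have \<phi>add: "\<phi> (a + b) = \<phi> a + \<phi> b" for a b
    unfolding \<phi>_def by (simp add: lookup_add sum.distrib algebra_simps)
  have \<phi>0: "\<phi> 0 = 0" unfolding \<phi>_def by simp
  have digit: "Poly_Mapping.lookup m j < N" if "m \<in> Poly_Mapping.keys p" "j < d" for m j
  proof -
    have "Poly_Mapping.lookup m j \<le> (\<Sum>j<d. Poly_Mapping.lookup m j)"
      using that by (intro member_le_sum) auto
    also have "\<dots> \<le> (\<Sum>m\<in>Poly_Mapping.keys p. \<Sum>j<d. Poly_Mapping.lookup m j)"
      using that by (intro member_le_sum) auto
    finally show ?thesis unfolding N_def by simp
  qed
  have inj: "inj_on \<phi> (Poly_Mapping.keys p)"
  proof (rule inj_onI)
    fix m m' assume mm: "m \<in> Poly_Mapping.keys p" "m' \<in> Poly_Mapping.keys p" "\<phi> m = \<phi> m'"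
    have "\<forall>j<d. Poly_Mapping.lookup m j = Poly_Mapping.lookup m' j"
      by (rule digits_unique[of d "Poly_Mapping.lookup m" N "Poly_Mapping.lookup m'"])
         (use mm digit in \<open>auto simp: \<phi>_def\<close>)
    moreover have "Poly_Mapping.keys m \<subseteq> {..<d}" "Poly_Mapping.keys m' \<subseteq> {..<d}"
      using mm keysp unfolding M_def by auto
    ultimately show "m = m'"
      by (intro poly_mapping_eqI) (metis in_keys_iff lessThan_iff subset_iff)
  qed
  have \<phi>pos: "\<phi> \<alpha> \<ge> 1" if "\<alpha> \<in> Zplus d" for \<alpha>
  proof -
    have "\<alpha> \<noteq> 0" "Poly_Mapping.keys \<alpha> \<subseteq> {..<d}" using that unfolding Zplus_def by auto
    then obtain j where j: "Poly_Mapping.lookup \<alpha> j \<noteq> 0"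
      by (metis lookup_zero poly_mapping_eqI)
    then have "j \<in> Poly_Mapping.keys \<alpha>" by (simp add: in_keys_iff)
    then have jd: "j < d" using \<open>Poly_Mapping.keys \<alpha> \<subseteq> {..<d}\<close> by auto
    have "N > 0" unfolding N_def by simp
    then have "1 \<le> Poly_Mapping.lookup \<alpha> j * N ^ j" using j by simp
    also have "\<dots> \<le> \<phi> \<alpha>" unfolding \<phi>_def using jd by (intro member_le_sum) auto
    finally show ?thesis .
  qed
  define k where "k = Max (insert 1 (\<phi> ` A))"
  have kpos: "k > 0" unfolding k_def using finA by (metis Max_ge finite_imageI finite_insert insertI1 less_one not_le zero_neq_one le_zero_eq)
  have \<phi>k: "\<phi> \<alpha> \<le> k" if "\<alpha> \<in> A" for \<alpha> unfolding k_def using finA that by (intro Max_ge) auto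
  have \<phi>range: "\<phi> ` A \<subseteq> {1..k}" using \<phi>k \<phi>pos AZ by auto
  define Fi where "Fi i = {\<alpha>\<in>A. \<phi> \<alpha> = i}" for i
  have finFi: "finite (Fi i)" for i unfolding Fi_def using finA by auto
  have FiZ: "Fi i \<subseteq> Zplus d" for i unfolding Fi_def using AZ by auto
  define g' where "g' i = vs.span (\<Union>\<alpha>\<in>Fi i. g \<alpha>)" for i
  have subFi: "\<forall>\<alpha>\<in>Fi i. vs.subspace (g \<alpha>)" for i using subg FiZ by blast
  have decomp: "\<exists>h. (\<forall>\<alpha>\<in>Fi i. h \<alpha> \<in> g \<alpha>) \<and> x = sum h (Fi i)" if "x \<in> g' i" for x i
    using vs.span_UN_subspaces_obtain[OF finFi subFi] that unfolding g'_def by blast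
  have indFi: "\<forall>S f. S \<subseteq> Fi i \<and> (\<forall>j\<in>S. f j \<in> g j) \<and> sum f S = 0 \<longrightarrow> (\<forall>j\<in>S. f j = 0)" for i
  proof (intro allI impI)
    fix S f assume H: "S \<subseteq> Fi i \<and> (\<forall>j\<in>S. f j \<in> g j) \<and> sum f S = 0"
    then have "finite S" "S \<subseteq> Zplus d" using finFi[of i] FiZ[of i] finite_subset by auto
    then show "\<forall>j\<in>S. f j = 0" using indg H by blast
  qed
  have ds: "is_direct_sum scale {1..k} g'"
    unfolding is_direct_sum_def
  proof (intro conjI allI impI)
    show "\<forall>i\<in>{1..k}. vs.subspace (g' i)" unfolding g'_def by (simp add: vs.subspace_span)
    have "(\<Union>\<alpha>\<in>Zplus d. g \<alpha>) \<subseteq> vs.span (\<Union>i\<in>{1..k}. g' i)"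
    proof (intro subsetI, elim UN_E)
      fix x \<alpha> assume \<alpha>: "\<alpha> \<in> Zplus d" and x: "x \<in> g \<alpha>"
      show "x \<in> vs.span (\<Union>i\<in>{1..k}. g' i)"
      proof (cases "\<alpha> \<in> A")
        case True
        then have "x \<in> g' (\<phi> \<alpha>)" unfolding g'_def Fi_def using x by (auto intro: vs.span_base)
        moreover have "\<phi> \<alpha> \<in> {1..k}" using \<phi>range True by auto
        ultimately have "x \<in> (\<Union>i\<in>{1..k}. g' i)" by blast
        then show ?thesis by (rule vs.span_base)
      next
        case False
        then have "x = 0" using \<alpha> x unfolding A_def by auto
        then show ?thesis by (simp add: vs.span_zero)
      qed
    qed
    then have "vs.span (\<Union>\<alpha>\<in>Zplus d. g \<alpha>) \<subseteq> vs.span (\<Union>i\<in>{1..k}. g' i)"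
      by (rule vs.span_minimal) (rule vs.subspace_span)
    then show "vs.span (\<Union>i\<in>{1..k}. g' i) = UNIV" using spang by auto
  next
    fix S f assume H: "finite S \<and> S \<subseteq> {1..k} \<and> (\<forall>i\<in>S. f i \<in> g' i) \<and> sum f S = 0"
    then have "\<forall>i\<in>S. \<exists>h. (\<forall>\<alpha>\<in>Fi i. h \<alpha> \<in> g \<alpha>) \<and> f i = sum h (Fi i)" using decomp by blast
    from bchoice[OF this] obtain Hh where Hh: "\<forall>i\<in>S. (\<forall>\<alpha>\<in>Fi i. Hh i \<alpha> \<in> g \<alpha>) \<and> f i = sum (Hh i) (Fi i)"
      by blast
    define G where "G \<alpha> = Hh (\<phi> \<alpha>) \<alpha>" for \<alpha>
    define U where "U = (\<Union>i\<in>S. Fi i)"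
    have disj: "\<forall>i\<in>S. \<forall>j\<in>S. i \<noteq> j \<longrightarrow> Fi i \<inter> Fi j = {}" unfolding Fi_def by auto
    have "sum G U = (\<Sum>i\<in>S. sum G (Fi i))"
      unfolding U_def using H finFi disj by (intro sum.UNION_disjoint) auto
    also have "\<dots> = (\<Sum>i\<in>S. f i)"
    proof (rule sum.cong[OF refl])
      fix i assume "i \<in> S"
      have "sum G (Fi i) = sum (Hh i) (Fi i)" by (rule sum.cong) (auto simp: G_def Fi_def)
      then show "sum G (Fi i) = f i" using Hh \<open>i \<in> S\<close> by simp
    qed
    finally have "sum G U = 0" using H by simp
    moreover have "finite U" "U \<subseteq> Zplus d" unfolding U_def using H finFi FiZ by auto
    moreover have "\<forall>\<alpha>\<in>U. G \<alpha> \<in> g \<alpha>" unfolding U_def G_def using Hh by (auto simp: Fi_def)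
    ultimately have G0: "\<forall>\<alpha>\<in>U. G \<alpha> = 0" using indg by blast
    show "\<forall>i\<in>S. f i = 0"
    proof
      fix i assume "i \<in> S"
      have "f i = sum (Hh i) (Fi i)" using Hh \<open>i \<in> S\<close> by simp
      also have "\<dots> = sum G (Fi i)" by (rule sum.cong) (auto simp: G_def Fi_def)
      also have "\<dots> = 0" using G0 \<open>i \<in> S\<close> unfolding U_def by (intro sum.neutral) auto
      finally show "f i = 0" .
    qed
  qed
  have brk: "\<forall>i\<in>{1..k}. \<forall>j\<in>{1..k}. \<forall>x\<in>g' i. \<forall>y\<in>g' j. br x y \<in> (if i + j \<le> k then g' (i + j) else {0})"
  proof (intro ballI)
    fix i j x y assume ij: "i \<in> {1..k}" "j \<in> {1..k}" and x: "x \<in> g' i" and y: "y \<in> g' j"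
    obtain hx where hx: "\<forall>\<alpha>\<in>Fi i. hx \<alpha> \<in> g \<alpha>" "x = sum hx (Fi i)" using decomp[OF x] by blast
    obtain hy where hy: "\<forall>\<alpha>\<in>Fi j. hy \<alpha> \<in> g \<alpha>" "y = sum hy (Fi j)" using decomp[OF y] by blast
    have bxy: "br x y = (\<Sum>\<alpha>\<in>Fi i. \<Sum>\<beta>\<in>Fi j. br (hx \<alpha>) (hy \<beta>))"
      unfolding hx(2) hy(2) by (simp only: br_sum_left[OF addl] br_sum_right[OF addr]) (rule sum.swap)
    have trm: "br (hx \<alpha>) (hy \<beta>) \<in> g (\<alpha> + \<beta>) \<and> \<alpha> + \<beta> \<in> Zplus d \<and> \<phi> (\<alpha> + \<beta>) = i + j"
      if "\<alpha> \<in> Fi i" "\<beta> \<in> Fi j" for \<alpha> \<beta>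
    proof -
      have a: "\<alpha> \<in> Zplus d" "\<beta> \<in> Zplus d" using that FiZ by blast+
      have "br (hx \<alpha>) (hy \<beta>) \<in> g (\<alpha> + \<beta>)" using brg a hx hy that by blast
      moreover have "\<alpha> + \<beta> \<in> Zplus d"
        using a keys_add[of \<alpha> \<beta>] pm_nat_add_eq_0[of \<alpha> \<beta>] unfolding Zplus_def by auto
      moreover have "\<phi> (\<alpha> + \<beta>) = i + j" using that \<phi>add unfolding Fi_def by simp
      ultimately show ?thesis by blast
    qed
    have trm0: "br (hx \<alpha>) (hy \<beta>) = 0" if "\<alpha> \<in> Fi i" "\<beta> \<in> Fi j" "\<alpha> + \<beta> \<notin> A" for \<alpha> \<beta>
      using trm[OF that(1,2)] that(3) unfolding A_def by auto
    show "br x y \<in> (if i + j \<le> k then g' (i + j) else {0})"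
    proof (cases "i + j \<le> k")
      case True
      have sg: "vs.subspace (g' (i + j))" unfolding g'_def by (rule vs.subspace_span)
      have "(\<Sum>\<alpha>\<in>Fi i. \<Sum>\<beta>\<in>Fi j. br (hx \<alpha>) (hy \<beta>)) \<in> g' (i + j)"
      proof (intro vs.subspace_sum[OF sg] ballI)
        fix \<alpha> \<beta> assume ab: "\<alpha> \<in> Fi i" "\<beta> \<in> Fi j"
        show "br (hx \<alpha>) (hy \<beta>) \<in> g' (i + j)"
        proof (cases "\<alpha> + \<beta> \<in> A")
          case True
          then have "\<alpha> + \<beta> \<in> Fi (i + j)" using trm[OF ab] unfolding Fi_def by simp
          then have "g (\<alpha> + \<beta>) \<subseteq> g' (i + j)" unfolding g'_def by (auto intro: vs.span_base)
          then show ?thesis using trm[OF ab] by blast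
        next
          case False
          then show ?thesis using trm0[OF ab] unfolding g'_def by (simp add: vs.span_zero)
        qed
      qed
      then show ?thesis using True bxy by simp
    next
      case False
      have "br x y = 0" unfolding bxy
      proof (intro sum.neutral ballI)
        fix \<alpha> \<beta> assume ab: "\<alpha> \<in> Fi i" "\<beta> \<in> Fi j"
        have "\<alpha> + \<beta> \<notin> A" using \<phi>k trm[OF ab] False by fastforce
        then show "br (hx \<alpha>) (hy \<beta>) = 0" using trm0[OF ab] by blast
      qed
      then show ?thesis using False by simp
    qed
  qed
  have kg: "k_grading scale br k g'" unfolding k_grading_def using ds brk by blast
  have dimg': "vs.dim (g' i) = (\<Sum>\<alpha>\<in>Fi i. vs.dim (g \<alpha>))" for i
    unfolding g'_def by (rule fd.dim_span_UN_indep[OF finFi subFi indFi])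
  have "assoc_poly1 scale k g' = (\<Prod>i\<in>{1..k}. \<Prod>\<alpha>\<in>Fi i. (1 - monom 1 i) ^ vs.dim (g \<alpha>))"
    unfolding assoc_poly1_def dimg' by (simp add: power_sum)
  also have "\<dots> = (\<Prod>i\<in>{1..k}. \<Prod>\<alpha>\<in>Fi i. (1 - monom 1 (\<phi> \<alpha>)) ^ vs.dim (g \<alpha>))"
    by (intro prod.cong refl) (simp add: Fi_def)
  also have "\<dots> = (\<Prod>\<alpha>\<in>A. (1 - monom 1 (\<phi> \<alpha>)) ^ vs.dim (g \<alpha>))"
    unfolding Fi_def by (rule prod.group[OF finA _ \<phi>range]) simp
  also have "\<dots> = subst_poly \<phi> p"
    unfolding p_eq
    by (simp add: subst_poly_prod subst_poly_power subst_poly_diff subst_poly_one subst_poly_single \<phi>add \<phi>0)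
  finally have "poly_length (assoc_poly1 scale k g') = mpoly_length p"
    using subst_poly_length[OF inj] by simp
  then show ?thesis using kpos kg unfolding p_def by blast
qed
end
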